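(* Let $\alpha\ge\omega^\omega$ be a multiplicatively indecomposable ordinal. Then $\sup_{\alpha'<\alpha}\mathbf{w}(P_{\alpha'})\ge\alpha$.
   Context: For an ordinal $\alpha$, $P_\alpha=\{(\beta_0,\beta_1):\beta_0\le\beta_1<\alpha\}$ ordered componentwise ($(\beta_0,\beta_1)\le(\gamma_0,\gamma_1)$ iff $\beta_0\le\gamma_0$ and $\beta_1\le\gamma_1$); it is a wqo. $\mathbf{w}(A)$ (width) is the rank of the root of the well-founded tree of finite sequences of pairwise incomparable elements of $A$ (root: empty sequence, children: one-element extensions; rank $r(s)=\sup\{r(t)+1: t\text{ child of } s\}$). Multiplicatively indecomposable ordinals $\ge\omega$ are those of the form $\omega^{\omega^\gamma}$. *)

theory Defs
  imports Main
begin

text \<open>Ordinals are represented by well-order relations (Main's BNF_Wellorder theory):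
  an ordinal alpha is the order type of a well-order r; the ordinals alpha' < alpha are the
  order types of the initial segments underS r a, a in Field r.\<close>

text \<open>Lists of length n form a block of type omega^n, so the order type
  is omega^0 + omega^1 + omega^2 + ... = omega^omega.\<close>
definition omega_omega :: "nat list rel" where
  "omega_omega = lenlex less_than \<union> Id"

text \<open>Ordinal product of (the order types of) two well-orders: lexicographic order on
  Field R \<times> Field S, first component most significant. Its order type is ot(S) * ot(R).\<close>
definition oprod_wo :: "'a rel \<Rightarrow> 'b rel \<Rightarrow> ('a \<times> 'b) rel" where
  "oprod_wo R S = {((x1, y1), (x2, y2)).
     x1 \<in> Field R \<and> x2 \<in> Field R \<and> y1 \<in> Field S \<and> y2 \<in> Field S \<and>
     (((x1, x2) \<in> R \<and> x1 \<noteq> x2) \<or> (x1 = x2 \<and> (y1, y2) \<in> S))}"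

definition mult_indecomposable :: "'a rel \<Rightarrow> bool" where
  "mult_indecomposable r \<longleftrightarrow>
     (\<exists>a\<in>Field r. \<exists>b\<in>Field r. a \<noteq> b) \<and>
     (\<forall>a\<in>Field r. \<forall>b\<in>Field r.
        (oprod_wo (Restr r (underS r a)) (Restr r (underS r b)), r) \<in> ordLess)"

text \<open>Rank in a (well-founded) tree given by its child relation ch, compared with ordinals
  below ot(W): rank_ge ch W s b means rank(s) \<ge> ot(underS W b), defined by the recursion
  rank(s) \<ge> beta  iff  for every gamma < beta there is a child t of s with rank(t) \<ge> gamma
  (equivalent to rank(s) = sup { rank(t) + 1 : t child of s }).\<close>
inductive rank_ge :: "('n \<Rightarrow> 'n \<Rightarrow> bool) \<Rightarrow> 'b rel \<Rightarrow> 'n \<Rightarrow> 'b \<Rightarrow> bool"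
  for ch :: "'n \<Rightarrow> 'n \<Rightarrow> bool" and W :: "'b rel" where
  "\<forall>c\<in>underS W b. \<exists>t. ch s t \<and> rank_ge ch W t c \<Longrightarrow> rank_ge ch W s b"

definition incomparable :: "('x \<Rightarrow> 'x \<Rightarrow> bool) \<Rightarrow> 'x \<Rightarrow> 'x \<Rightarrow> bool" where
  "incomparable le x y \<longleftrightarrow> \<not> le x y \<and> \<not> le y x"

definition antichain_seq :: "('x \<Rightarrow> 'x \<Rightarrow> bool) \<Rightarrow> 'x set \<Rightarrow> 'x list \<Rightarrow> bool" where
  "antichain_seq le A xs \<longleftrightarrow> set xs \<subseteq> A \<and>
     (\<forall>i j. i < j \<and> j < length xs \<longrightarrow> incomparable le (xs ! i) (xs ! j))"

definition ac_child :: "('x \<Rightarrow> 'x \<Rightarrow> bool) \<Rightarrow> 'x set \<Rightarrow> 'x list \<Rightarrow> 'x list \<Rightarrow> bool" where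
  "ac_child le A s t \<longleftrightarrow> antichain_seq le A s \<and> antichain_seq le A t \<and> (\<exists>x. t = s @ [x])"

text \<open>width_gt le A W b:  w(A) > ot(underS W b), i.e. the root [] (whose rank is w(A)) has a
  child of rank \<ge> ot(underS W b).\<close>
definition width_gt :: "('x \<Rightarrow> 'x \<Rightarrow> bool) \<Rightarrow> 'x set \<Rightarrow> 'b rel \<Rightarrow> 'b \<Rightarrow> bool" where
  "width_gt le A W b \<longleftrightarrow> (\<exists>t. ac_child le A [] t \<and> rank_ge (ac_child le A) W t b)"

text \<open>P_{alpha'} for alpha' = ot(underS r a): pairs (b0,b1) with b0 \<le> b1 < alpha',
  ordered componentwise.\<close>
definition Pset :: "'a rel \<Rightarrow> 'a \<Rightarrow> ('a \<times> 'a) set" where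
  "Pset r a = {(x, y). (x, y) \<in> r \<and> (y, a) \<in> r \<and> y \<noteq> a}"

definition Ple :: "'a rel \<Rightarrow> 'a \<times> 'a \<Rightarrow> 'a \<times> 'a \<Rightarrow> bool" where
  "Ple r p q \<longleftrightarrow> (fst p, fst q) \<in> r \<and> (snd p, snd q) \<in> r"

end

theory Submission
  imports Defs
begin

lemma rank_main:
  fixes r :: "'a rel" and X :: "nat \<Rightarrow> 'a" and G :: "'a \<Rightarrow> 'a"
  assumes wo: "Well_order r"
    and Xm: "\<And>i j. i < j \<Longrightarrow> (X i, X j) \<in> r \<and> X i \<noteq> X j"
    and Gm: "\<And>c d. c \<in> underS r a2 \<Longrightarrow> d \<in> underS r a2 \<Longrightarrow> (c, d) \<in> r \<Longrightarrow> c \<noteq> d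
               \<Longrightarrow> (G c, G d) \<in> r \<and> G c \<noteq> G d"
    and XG: "\<And>i c. c \<in> underS r a2 \<Longrightarrow> (X i, G c) \<in> r"
    and Ga: "\<And>c. c \<in> underS r a2 \<Longrightarrow> (G c, a) \<in> r \<and> G c \<noteq> a"
  shows "(c, a2) \<in> r \<Longrightarrow> antichain_seq (Ple r) (Pset r a) s \<Longrightarrow> s \<noteq> [] \<Longrightarrow>
     (\<forall>z\<in>set s. \<exists>i<length s. fst z = X i) \<Longrightarrow> (\<forall>z\<in>set s. (snd (last s), snd z) \<in> r) \<Longrightarrow>
     (\<forall>c'. (c', c) \<in> r \<and> c' \<noteq> c \<longrightarrow> (G c', snd (last s)) \<in> r \<and> G c' \<noteq> snd (last s)) \<Longrightarrow>
     rank_ge (ac_child (Ple r) (Pset r a)) r s c"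
proof (induction c arbitrary: s rule: wf_induct_rule[OF wo_rel.WF[unfolded wo_rel_def, OF wo]])
  case (1 c)
  have tr: "trans r" and an: "antisym r" and rf: "refl_on (Field r) r"
    using wo unfolding well_order_on_def linear_order_on_def partial_order_on_def preorder_on_def by auto
  show ?case
  proof (rule rank_ge.intros, intro ballI)
    fix c' assume c': "c' \<in> underS r c"
    hence c'r: "(c', c) \<in> r" "c' \<noteq> c" by (auto simp: underS_def)
    have c'u: "c' \<in> underS r a2"
    proof -
      have "(c', a2) \<in> r" using tr c'r(1) "1.prems"(1) by (meson transD)
      moreover have "c' \<noteq> a2" using an c'r "1.prems"(1) by (metis antisymD)
      ultimately show ?thesis by (simp add: underS_def)
    qed
    define y where "y = snd (last s)"
    have Gy: "(G c', y) \<in> r" "G c' \<noteq> y" using "1.prems"(6) c'r y_def by auto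
    define n where "n = (X (length s), G c')"
    define s' where "s' = s @ [n]"
    have Gf: "G c' \<in> Field r" using Ga[OF c'u] by (auto simp: Field_def)
    have nP: "n \<in> Pset r a" using XG[OF c'u] Ga[OF c'u] by (simp add: n_def Pset_def)
    have inc: "incomparable (Ple r) z n" if z: "z \<in> set s" for z
    proof -
      obtain i where i: "i < length s" "fst z = X i" using "1.prems"(4) z by auto
      have "(y, snd z) \<in> r" using "1.prems"(5) z y_def by auto
      hence "(G c', snd z) \<in> r" using Gy tr by (meson transD)
      moreover have "G c' \<noteq> snd z" using Gy `(y, snd z) \<in> r` an by (metis antisymD)
      ultimately have A: "(snd z, G c') \<notin> r" using an by (metis antisymD)
      have B: "(X (length s), X i) \<notin> r" using Xm[OF i(1)] an by (metis antisymD)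
      show ?thesis using A B i unfolding incomparable_def Ple_def n_def by auto
    qed
    have acs': "antichain_seq (Ple r) (Pset r a) s'"
      unfolding antichain_seq_def
    proof (intro conjI allI impI)
      show "set s' \<subseteq> Pset r a" using "1.prems"(2) nP by (auto simp: s'_def antichain_seq_def)
      fix i j assume ij: "i < j \<and> j < length s'"
      show "incomparable (Ple r) (s' ! i) (s' ! j)"
      proof (cases "j < length s")
        case True thus ?thesis using ij "1.prems"(2)
          by (auto simp: s'_def nth_append antichain_seq_def)
      next
        case False
        hence "j = length s" using ij by (auto simp: s'_def)
        thus ?thesis using ij inc[of "s ! i"] by (auto simp: s'_def nth_append)
      qed
    qed
    have IH: "rank_ge (ac_child (Ple r) (Pset r a)) r s' c'"
    proof (rule "1.IH")
      show "(c', c) \<in> r - Id" using c'r by auto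
      show "(c', a2) \<in> r" using c'u by (simp add: underS_def)
      show "antichain_seq (Ple r) (Pset r a) s'" by (rule acs')
      show "s' \<noteq> []" by (simp add: s'_def)
      show "\<forall>z\<in>set s'. \<exists>i<length s'. fst z = X i"
      proof
        fix z assume "z \<in> set s'"
        then consider "z \<in> set s" | "z = n" by (auto simp: s'_def)
        thus "\<exists>i<length s'. fst z = X i"
        proof cases
          case 1 then obtain i where "i < length s" "fst z = X i" using "1.prems"(4) by auto
          thus ?thesis by (intro exI[of _ i]) (auto simp: s'_def)
        next
          case 2 thus ?thesis by (intro exI[of _ "length s"]) (auto simp: s'_def n_def)
        qed
      qed
      show "\<forall>z\<in>set s'. (snd (last s'), snd z) \<in> r"
      proof
        fix z assume "z \<in> set s'"
        then consider "z \<in> set s" | "z = n" by (auto simp: s'_def)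
        thus "(snd (last s'), snd z) \<in> r"
        proof cases
          case 1
          have "(y, snd z) \<in> r" using "1.prems"(5) 1 y_def by auto
          thus ?thesis using Gy tr by (auto simp: s'_def n_def elim: transE)
        next
          case 2 thus ?thesis using Gf rf by (auto simp: s'_def n_def refl_on_def)
        qed
      qed
      show "\<forall>c''. (c'', c') \<in> r \<and> c'' \<noteq> c' \<longrightarrow> (G c'', snd (last s')) \<in> r \<and> G c'' \<noteq> snd (last s')"
      proof (intro allI impI)
        fix c'' assume h: "(c'', c') \<in> r \<and> c'' \<noteq> c'"
        have "c'' \<in> underS r a2"
        proof -
          have "(c'', a2) \<in> r" using tr h c'u by (auto simp: underS_def elim: transE)
          moreover have "c'' \<noteq> a2" using an h c'u by (auto simp: underS_def antisym_def)
          ultimately show ?thesis by (simp add: underS_def)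
        qed
        thus "(G c'', snd (last s')) \<in> r \<and> G c'' \<noteq> snd (last s')"
          using Gm[OF _ c'u] h by (simp add: s'_def n_def)
      qed
    qed
    have "ac_child (Ple r) (Pset r a) s s'"
      using "1.prems"(2) acs' by (auto simp: ac_child_def s'_def)
    thus "\<exists>t. ac_child (Ple r) (Pset r a) s t \<and> rank_ge (ac_child (Ple r) (Pset r a)) r t c'"
      using IH by blast
  qed
qed

lemma embed_strict:
  assumes "Well_order R" "embed R r f" "(x, y) \<in> R" "x \<noteq> y"
  shows "(f x, f y) \<in> r \<and> f x \<noteq> f y"
proof
  show "(f x, f y) \<in> r" using embed_compat[OF assms(2)] assms(3) unfolding compat_def by blast
  have "x \<in> Field R" "y \<in> Field R" using assms(3) by (auto simp: Field_def)
  thus "f x \<noteq> f y" using embed_inj_on[OF assms(1,2)] assms(4) by (auto simp: inj_on_def)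
qed

lemma oo_lt: "xs \<noteq> ys \<Longrightarrow> length xs < length ys \<or> length xs = length ys \<and> (xs, ys) \<in> lex less_than
   \<Longrightarrow> (xs, ys) \<in> omega_omega"
  by (auto simp: omega_omega_def lenlex_conv)

theorem mainTheorem16:
  fixes r :: "'a rel"
  assumes "Well_order r"
    and "mult_indecomposable r"
    and "(omega_omega, r) \<in> ordLeq"
  shows "\<forall>b\<in>Field r. \<exists>a\<in>Field r. width_gt (Ple r) (Pset r a) r b"
proof (intro ballI)
  fix b assume bF: "b \<in> Field r"
  have wo: "Well_order r" by fact
  have tr: "trans r" and an: "antisym r" and rf: "refl_on (Field r) r" and tot: "Total r"
    using wo unfolding well_order_on_def linear_order_on_def partial_order_on_def preorder_on_def by auto
  obtain e where woo: "Well_order omega_omega" and em: "embed omega_omega r e"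
    using assms(3) unfolding ordLeq_def by blast
  have eF: "e xs \<in> Field r" for xs
    by (rule embed_in_Field[OF em]) (auto simp: Field_def omega_omega_def)
  have es: "(e xs, e ys) \<in> r \<and> e xs \<noteq> e ys"
    if "xs \<noteq> ys" "length xs < length ys \<or> length xs = length ys \<and> (xs, ys) \<in> lex less_than" for xs ys
    using embed_strict[OF woo em oo_lt[OF that]] that(1) by blast
  define W where "W = e [0,0]"
  define E where "E n = e [n]" for n
  define a1 where "a1 = e [4]"
  define a2 where "a2 = (if (b, W) \<in> r then W else b)"
  have WF: "W \<in> Field r" and a1F: "a1 \<in> Field r" using eF by (auto simp: W_def a1_def)
  have ba2: "(b, a2) \<in> r" and Wa2: "(W, a2) \<in> r"
    using tot bF WF rf by (auto simp: a2_def total_on_def refl_on_def) (metis)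
  have a2F: "a2 \<in> Field r" using WF bF by (auto simp: a2_def)
  have EW: "(E n, W) \<in> r \<and> E n \<noteq> W" for n using es[of "[n]" "[0,0]"] by (simp add: E_def W_def)
  have Eu: "E n \<in> underS r a2" for n
  proof -
    have "(E n, a2) \<in> r" using EW[of n] Wa2 tr by (auto elim: transE)
    moreover have "E n \<noteq> a2" using EW[of n] Wa2 an by (auto simp: antisym_def)
    ultimately show ?thesis by (simp add: underS_def)
  qed
  have Em: "i < j \<Longrightarrow> (E i, E j) \<in> r \<and> E i \<noteq> E j" for i j
    using es[of "[i]" "[j]"] by (simp add: E_def)
  define K where "K = Restr r (underS r a1)"
  define L where "L = Restr r (underS r a2)"
  have "(oprod_wo K L, r) \<in> ordLess" using assms(2) a1F a2F
    unfolding mult_indecomposable_def K_def L_def by blast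
  then obtain g where wop: "Well_order (oprod_wo K L)" and gem: "embed (oprod_wo K L) r g"
    unfolding ordLess_def embedS_def by blast
  have gs: "(g (u, v), g (u', v')) \<in> r \<and> g (u, v) \<noteq> g (u', v')"
    if "u \<in> underS r a1" "u' \<in> underS r a1" "v \<in> underS r a2" "v' \<in> underS r a2"
      "((u, u') \<in> r \<and> u \<noteq> u') \<or> (u = u' \<and> (v, v') \<in> r \<and> v \<noteq> v')" for u u' v v'
  proof (rule embed_strict[OF wop gem])
    have F: "x \<in> Field r" if "x \<in> underS r c" for x c using that by (auto simp: underS_def Field_def)
    have KF: "x \<in> Field K" if "x \<in> underS r a1" for x
      using that F[OF that] rf by (auto simp: K_def Field_def refl_on_def)
    have LF: "x \<in> Field L" if "x \<in> underS r a2" for x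
      using that F[OF that] rf by (auto simp: L_def Field_def refl_on_def)
    show "((u, v), u', v') \<in> oprod_wo K L"
      using that KF LF unfolding oprod_wo_def by (auto simp: K_def L_def)
    show "(u, v) \<noteq> (u', v')" using that by auto
  qed
  have Pu: "e [k] \<in> underS r a1" if "k < 4" for k
    using es[of "[k]" "[4]"] that by (simp add: a1_def underS_def)
  define X where "X n = g (e [0], E n)" for n
  define G where "G c = g (e [1], c)" for c
  define Y0 where "Y0 = g (e [2], E 0)"
  define a where "a = g (e [3], E 0)"
  have P01: "(e [0], e [1]) \<in> r \<and> e [0] \<noteq> e [1]" using es[of "[0]" "[1]"] by simp
  have P02: "(e [0], e [2]) \<in> r \<and> e [0] \<noteq> e [2]" using es[of "[0]" "[2]"] by simp
  have P12: "(e [1], e [2]) \<in> r \<and> e [1] \<noteq> e [2]" using es[of "[1]" "[2]"] by simp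
  have P13: "(e [1], e [3]) \<in> r \<and> e [1] \<noteq> e [3]" using es[of "[1]" "[3]"] by simp
  have P23: "(e [2], e [3]) \<in> r \<and> e [2] \<noteq> e [3]" using es[of "[2]" "[3]"] by simp
  have P3u: "e [3] \<in> underS r a1" using Pu[of 3] by simp
  have aF: "a \<in> Field r"
    using gs[OF Pu[of 2] P3u Eu Eu, of 0 0] P23 by (auto simp: a_def Field_def)
  have Y0a: "(Y0, a) \<in> r \<and> Y0 \<noteq> a"
    using gs[OF Pu[of 2] P3u Eu Eu, of 0 0] P23 by (simp add: a_def Y0_def)
  have rk: "rank_ge (ac_child (Ple r) (Pset r a)) r [(X 0, Y0)] b"
  proof (rule rank_main[of r X a2 G a])
    show "Well_order r" by fact
    show "(X i, X j) \<in> r \<and> X i \<noteq> X j" if "i < j" for i j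
      using gs[OF Pu[of 0] Pu[of 0] Eu Eu, of i j] Em[OF that] by (simp add: X_def)
    show "(G c, G d) \<in> r \<and> G c \<noteq> G d"
      if "c \<in> underS r a2" "d \<in> underS r a2" "(c, d) \<in> r" "c \<noteq> d" for c d
      using gs[OF Pu[of 1] Pu[of 1] that(1,2)] that by (simp add: G_def)
    show "(X i, G c) \<in> r" if "c \<in> underS r a2" for i c
      using gs[OF Pu[of 0] Pu[of 1] Eu that, of i] P01 by (simp add: G_def X_def)
    show "(G c, a) \<in> r \<and> G c \<noteq> a" if "c \<in> underS r a2" for c
      using gs[OF Pu[of 1] P3u that Eu, of 0] P13 by (simp add: G_def a_def)
    show "(b, a2) \<in> r" by (rule ba2)
    have XY: "(X 0, Y0) \<in> r" using gs[OF Pu[of 0] Pu[of 2] Eu Eu, of 0 0] P02 by (simp add: X_def Y0_def)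
    show "antichain_seq (Ple r) (Pset r a) [(X 0, Y0)]"
      using XY Y0a by (auto simp: antichain_seq_def Pset_def)
    show "[(X 0, Y0)] \<noteq> []" by simp
    show "\<forall>z\<in>set [(X 0, Y0)]. \<exists>i<length [(X 0, Y0)]. fst z = X i" by auto
    have "Y0 \<in> Field r" using Y0a by (auto simp: Field_def)
    thus "\<forall>z\<in>set [(X 0, Y0)]. (snd (last [(X 0, Y0)]), snd z) \<in> r" using rf by (auto simp: refl_on_def)
    show "\<forall>c'. (c', b) \<in> r \<and> c' \<noteq> b \<longrightarrow> (G c', snd (last [(X 0, Y0)])) \<in> r \<and> G c' \<noteq> snd (last [(X 0, Y0)])"
    proof (intro allI impI)
      fix c' assume h: "(c', b) \<in> r \<and> c' \<noteq> b"
      have "(c', a2) \<in> r" using h ba2 tr by (auto elim: transE)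
      moreover have "c' \<noteq> a2" using h ba2 an by (auto simp: antisym_def)
      ultimately have cu: "c' \<in> underS r a2" by (simp add: underS_def)
      show "(G c', snd (last [(X 0, Y0)])) \<in> r \<and> G c' \<noteq> snd (last [(X 0, Y0)])"
        using gs[OF Pu[of 1] Pu[of 2] cu Eu, of 0] P12 by (simp add: G_def Y0_def)
    qed
  qed
  have "ac_child (Ple r) (Pset r a) [] [(X 0, Y0)]"
  proof -
    have XY: "(X 0, Y0) \<in> r" using gs[OF Pu[of 0] Pu[of 2] Eu Eu, of 0 0] P02 by (simp add: X_def Y0_def)
    thus ?thesis using Y0a by (auto simp: ac_child_def antichain_seq_def Pset_def)
  qed
  thus "\<exists>a\<in>Field r. width_gt (Ple r) (Pset r a) r b"
    using rk aF unfolding width_gt_def by blast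
qed

end
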